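(* Let $m\ge1$ and suppose $u=u_1\ldots u_n\in[m]^*$ is weakly increasing ($u_1\le\cdots\le u_n$). Then $$S(u;x_1,\ldots,x_m)=\frac{\prod_{i=1}^n\sum_{j=u_i}^m x_j}{\left(1+\sum_{i=1}^{n-1}\prod_{j=i+1}^n\sum_{l=u_j}^m x_l\right)\left(1-\sum_{i=1}^m x_i\right)+\prod_{i=1}^n\sum_{j=u_i}^m x_j}.$$
   Context: $[m]^*$ is the set of finite words over $[m]=\{1,\ldots,m\}$ with the usual order. An embedding of $u$ into $w$ is a string of $|u|$ consecutive letters of $w$ whose $i$-th letter is $\ge$ the $i$-th letter of $u$ for every $i$. $\mathcal{S}(u)$ is the set of words $w$ admitting an embedding of $u$ such that the last $|u|$ letters of $w$ form the only embedding of $u$ into $w$. For $w\in[m]^*$, $c_i(w)$ is the number of occurrences of $i$ in $w$ and $W_{[m]}(w)=\prod_{i=1}^m x_i^{c_i(w)}$. $S(u;x_1,\ldots,x_m)=\sum_{w\in\mathcal{S}(u)\cap[m]^*}W_{[m]}(w)$. *)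

theory Defs
  imports "HOL-Analysis.Analysis"
begin

definition embeds_at :: "nat list \<Rightarrow> nat list \<Rightarrow> nat \<Rightarrow> bool" where
  "embeds_at u w k \<longleftrightarrow> k + length u \<le> length w \<and> (\<forall>i<length u. u ! i \<le> w ! (k + i))"

definition words :: "nat \<Rightarrow> nat list set" where
  "words m = {w. set w \<subseteq> {1..m}}"

definition Sset :: "nat list \<Rightarrow> nat list set" where
  "Sset u = {w. embeds_at u w (length w - length u) \<and> length u \<le> length w \<and>
                (\<forall>k. embeds_at u w k \<longrightarrow> k = length w - length u)}"

definition weight :: "nat \<Rightarrow> (nat \<Rightarrow> real) \<Rightarrow> nat list \<Rightarrow> real" where
  "weight m x w = (\<Prod>i\<in>{1..m}. x i ^ count_list w i)"

end

theory Submission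
  imports Defs
begin


definition W :: "nat \<Rightarrow> nat \<Rightarrow> nat list set" where
  "W m l = {w. length w = l \<and> set w \<subseteq> {1..m}}"

definition domw :: "nat list \<Rightarrow> nat list \<Rightarrow> bool" where
  "domw q v \<longleftrightarrow> length v = length q \<and> (\<forall>i<length q. q!i \<le> v!i)"

definition avoid :: "nat list \<Rightarrow> nat list \<Rightarrow> bool" where
  "avoid u w \<longleftrightarrow> (\<forall>k. \<not> embeds_at u w k)"

lemma finite_W: "finite (W m l)"
proof -
  have "W m l = {xs. set xs \<subseteq> {1..m} \<and> length xs = l}" by (auto simp: W_def)
  thus ?thesis using finite_lists_length_eq[of "{1..m}" l] by simp
qed

lemma weight_app: "weight m x (w @ v) = weight m x w * weight m x v"
  unfolding weight_def by (simp add: power_add prod.distrib)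

lemma weight_nonneg: "(\<forall>i\<in>{1..m}. x i \<ge> 0) \<Longrightarrow> weight m x w \<ge> 0"
  unfolding weight_def by (intro prod_nonneg) auto

lemma weight_single: "c \<in> {1..m} \<Longrightarrow> weight m x [c] = x c"
proof -
  assume c: "c \<in> {1..m}"
  have "weight m x [c] = (\<Prod>i\<in>{1..m}. if i = c then x i else 1)"
    unfolding weight_def by (intro prod.cong) auto
  also have "\<dots> = x c" using c by (simp add: prod.delta)
  finally show ?thesis .
qed

lemma weight_nil: "weight m x [] = 1" by (simp add: weight_def)

lemma W0: "W m 0 = {[]}" by (auto simp: W_def)

lemma t1: "set w \<subseteq> {1..m} \<Longrightarrow> set (take j w) \<subseteq> {1..m}"
  by (meson order.trans set_take_subset)
lemma t2: "set w \<subseteq> {1..m} \<Longrightarrow> set (drop j w) \<subseteq> {1..m}"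
  by (meson order.trans set_drop_subset)
lemma t3: "w \<in> W m (j+l) \<Longrightarrow> take j w \<in> W m j \<and> drop j w \<in> W m l"
  unfolding W_def mem_Collect_eq using t1[of w m j] t2[of w m j] by simp
lemma t4: "a \<in> W m j \<Longrightarrow> b \<in> W m l \<Longrightarrow> a @ b \<in> W m (j+l) \<and> take j (a@b) = a \<and> drop j (a@b) = b"
  unfolding W_def mem_Collect_eq by simp

lemma prodsum:
  "(\<Sum>w\<in>{w\<in>W m (j+l). P (take j w) \<and> Q (drop j w)}. weight m x w) =
   (\<Sum>w\<in>{w\<in>W m j. P w}. weight m x w) * (\<Sum>v\<in>{v\<in>W m l. Q v}. weight m x v)"
proof -
  let ?A = "{w\<in>W m j. P w}" and ?B = "{v\<in>W m l. Q v}"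
  have eq: "{w\<in>W m (j+l). P (take j w) \<and> Q (drop j w)} = (\<lambda>(a,b). a @ b) ` (?A \<times> ?B)"
  proof
    show "{w\<in>W m (j+l). P (take j w) \<and> Q (drop j w)} \<subseteq> (\<lambda>(a,b). a @ b) ` (?A \<times> ?B)"
    proof
      fix w assume w: "w \<in> {w\<in>W m (j+l). P (take j w) \<and> Q (drop j w)}"
      hence w1: "w \<in> W m (j+l)" and pq: "P (take j w)" "Q (drop j w)" by simp_all
      have tw: "(take j w, drop j w) \<in> ?A \<times> ?B" using t3[OF w1] pq by simp
      have "w = (\<lambda>(a,b). a @ b) (take j w, drop j w)" by simp
      thus "w \<in> (\<lambda>(a,b). a @ b) ` (?A \<times> ?B)" using tw by (rule image_eqI)
    qed
  next
    show "(\<lambda>(a,b). a @ b) ` (?A \<times> ?B) \<subseteq> {w\<in>W m (j+l). P (take j w) \<and> Q (drop j w)}"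
    proof
      fix w assume "w \<in> (\<lambda>(a,b). a @ b) ` (?A \<times> ?B)"
      then obtain p where p: "p \<in> ?A \<times> ?B" "w = (\<lambda>(a,b). a @ b) p" by (rule imageE)
      obtain a b where pab: "p = (a, b)" by (cases p)
      have ab: "w = a @ b" "a \<in> ?A" "b \<in> ?B" using p pab by simp_all
      hence "a \<in> W m j" "b \<in> W m l" "P a" "Q b" by simp_all
      thus "w \<in> {w\<in>W m (j+l). P (take j w) \<and> Q (drop j w)}"
        using t4[of a m j b l] ab(1) by simp
    qed
  qed
  have inj: "inj_on (\<lambda>(a,b). a @ b) (?A \<times> ?B)"
  proof (rule inj_onI)
    fix p q assume p: "p \<in> ?A \<times> ?B" and q: "q \<in> ?A \<times> ?B"
      and e: "(\<lambda>(a,b). a @ b) p = (\<lambda>(a,b). a @ b) q"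
    obtain a b where pab: "p = (a,b)" by (cases p)
    obtain a' b' where qab: "q = (a',b')" by (cases q)
    have "length a = j" "length a' = j" using p q pab qab unfolding W_def by auto
    moreover have "a @ b = a' @ b'" using e pab qab by simp
    ultimately have "a = a' \<and> b = b'" by (simp add: append_eq_append_conv)
    thus "p = q" using pab qab by simp
  qed
  have fA: "finite ?A" and fB: "finite ?B" using finite_W by auto
  have "(\<Sum>w\<in>{w\<in>W m (j+l). P (take j w) \<and> Q (drop j w)}. weight m x w)
      = (\<Sum>p\<in>?A \<times> ?B. weight m x (fst p @ snd p))"
    unfolding eq by (subst sum.reindex[OF inj]) (auto intro: sum.cong)
  also have "\<dots> = (\<Sum>a\<in>?A. \<Sum>b\<in>?B. weight m x a * weight m x b)"
    by (simp add: sum.cartesian_product weight_app case_prod_beta)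
  also have "\<dots> = (\<Sum>w\<in>?A. weight m x w) * (\<Sum>v\<in>?B. weight m x v)"
    by (simp add: sum_product)
  finally show ?thesis .
qed

lemma sum_W1: "(\<Sum>w\<in>{w\<in>W m 1. P w}. weight m x w) = (\<Sum>c\<in>{c\<in>{1..m}. P [c]}. x c)"
proof -
  have eq: "{w\<in>W m 1. P w} = (\<lambda>c. [c]) ` {c\<in>{1..m}. P [c]}"
    by (auto simp: W_def length_Suc_conv)
  show ?thesis unfolding eq
    by (subst sum.reindex) (auto simp: inj_on_def weight_single intro: sum.cong)
qed

lemma sum_dom:
  "set q \<subseteq> {1..m} \<Longrightarrow>
   (\<Sum>v\<in>{v\<in>W m (length q). domw q v}. weight m x v) = (\<Prod>i<length q. \<Sum>j=q!i..m. x j)"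
proof (induction q)
  case Nil
  thus ?case by (simp add: W0 domw_def weight_nil)
next
  case (Cons a q)
  have "{v\<in>W m (length (a#q)). domw (a#q) v} =
        {v\<in>W m (1 + length q). domw [a] (take 1 v) \<and> domw q (drop 1 v)}"
  proof -
    have "domw (a#q) v \<longleftrightarrow> domw [a] (take 1 v) \<and> domw q (drop 1 v)" if "length v = 1 + length q" for v
      using that by (cases v) (auto simp: domw_def nth_Cons split: nat.splits)
    thus ?thesis by (auto simp: W_def)
  qed
  also have "(\<Sum>v\<in>\<dots>. weight m x v) = (\<Sum>w\<in>{w\<in>W m 1. domw [a] w}. weight m x w) * (\<Sum>v\<in>{v\<in>W m (length q). domw q v}. weight m x v)"
    by (rule prodsum)
  also have "(\<Sum>w\<in>{w\<in>W m 1. domw [a] w}. weight m x w) = (\<Sum>c\<in>{c\<in>{1..m}. domw [a] [c]}. x c)"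
    by (rule sum_W1)
  also have "{c\<in>{1..m}. domw [a] [c]} = {a..m}" using Cons.prems by (auto simp: domw_def)
  also have "(\<Sum>v\<in>{v\<in>W m (length q). domw q v}. weight m x v) = (\<Prod>i<length q. \<Sum>j=q!i..m. x j)"
    using Cons by simp
  finally show ?case by (simp del: prod.lessThan_Suc add: prod.lessThan_Suc_shift)
qed


lemma emb_take: "embeds_at u (take L w) k \<longleftrightarrow> k + length u \<le> L \<and> embeds_at u w k"
  unfolding embeds_at_def by auto

lemma avoid_take: "avoid u w \<Longrightarrow> avoid u (take L w)"
  unfolding avoid_def by (simp add: emb_take)

lemma SsetD1: "w \<in> Sset u \<Longrightarrow> embeds_at u w (length w - length u)"
  unfolding Sset_def by blast
lemma SsetD2: "w \<in> Sset u \<Longrightarrow> length u \<le> length w"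
  unfolding Sset_def by blast
lemma SsetD3: "w \<in> Sset u \<Longrightarrow> embeds_at u w k \<Longrightarrow> k = length w - length u"
  unfolding Sset_def by blast
lemma SsetI: "embeds_at u w (length w - length u) \<Longrightarrow> length u \<le> length w \<Longrightarrow>
   (\<And>k. embeds_at u w k \<Longrightarrow> k = length w - length u) \<Longrightarrow> w \<in> Sset u"
  unfolding Sset_def by blast

lemma step_char:
  assumes "length w = Suc k"
  shows "avoid u (take k w) \<longleftrightarrow> avoid u w \<or> w \<in> Sset u"
proof
  assume a: "avoid u (take k w)"
  show "avoid u w \<or> w \<in> Sset u"
  proof (cases "avoid u w")
    case False
    have all: "k' = length w - length u \<and> length u \<le> length w" if "embeds_at u w k'" for k'
    proof -
      have "\<not> (k' + length u \<le> k)"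
      proof
        assume "k' + length u \<le> k"
        hence "embeds_at u (take k w) k'" using that by (simp add: emb_take)
        thus False using a unfolding avoid_def by simp
      qed
      moreover have "k' + length u \<le> length w" using that by (simp add: embeds_at_def)
      ultimately show ?thesis using assms by simp
    qed
    from False obtain k' where e: "embeds_at u w k'" unfolding avoid_def by blast
    have e2: "k' = length w - length u" "length u \<le> length w" using all[OF e] by simp_all
    have e3: "\<forall>k''. embeds_at u w k'' \<longrightarrow> k'' = length w - length u"
    proof (intro allI impI)
      fix k'' assume "embeds_at u w k''"
      from all[OF this] show "k'' = length w - length u" by simp
    qed
    have "embeds_at u w (length w - length u)" using e e2(1) by simp
    hence "w \<in> Sset u" by (rule SsetI[OF _ e2(2)]) (use e3 in blast)
    thus ?thesis by simp
  qed simp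
next
  assume "avoid u w \<or> w \<in> Sset u"
  thus "avoid u (take k w)"
  proof
    assume "w \<in> Sset u"
    have S1: "\<And>k'. embeds_at u w k' \<Longrightarrow> k' = length w - length u"
      using \<open>w \<in> Sset u\<close> by (rule SsetD3)
    have S2: "length u \<le> length w" using \<open>w \<in> Sset u\<close> by (rule SsetD2)
    note S = S1 S2
    show ?thesis unfolding avoid_def
    proof (intro allI notI)
      fix k' assume "embeds_at u (take k w) k'"
      hence k1: "k' + length u \<le> k" "embeds_at u w k'" by (simp_all add: emb_take)
      hence "k' = length w - length u" using S(1) by simp
      thus False using k1(1) S(2) assms by simp
    qed
  qed (rule avoid_take)
qed

lemma avoid_notS: "avoid u w \<Longrightarrow> w \<notin> Sset u"
  unfolding avoid_def using SsetD1 by blast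

lemma E1:
  assumes len: "length w = j + length u" and av: "avoid u (take j w)" and d: "domw u (drop j w)"
  shows "\<exists>r\<in>{1..length u}. take (j+r) w \<in> Sset u \<and> domw (drop r u) (drop (j+r) w)"
proof -
  let ?n = "length u"
  have ej: "embeds_at u w j" using len d unfolding embeds_at_def domw_def by auto
  define e where "e = (LEAST k. embeds_at u w k)"
  have ee: "embeds_at u w e" unfolding e_def using ej by (rule LeastI)
  have emin: "\<And>k. embeds_at u w k \<Longrightarrow> e \<le> k" unfolding e_def by (rule Least_le)
  have "e \<le> j" using emin ej .
  have "\<not> e + ?n \<le> j"
  proof
    assume "e + ?n \<le> j"
    hence "embeds_at u (take j w) e" using ee by (simp add: emb_take)
    thus False using av unfolding avoid_def by simp
  qed
  define r where "r = e + ?n - j"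
  have r: "r \<in> {1..?n}" "j + r = e + ?n" using \<open>e \<le> j\<close> \<open>\<not> e + ?n \<le> j\<close> unfolding r_def by auto
  have "take (j+r) w \<in> Sset u"
  proof -
    have lt: "length (take (j+r) w) = e + ?n" using r len \<open>e \<le> j\<close> by simp
    have "embeds_at u (take (j+r) w) e" using ee r by (simp add: emb_take)
    moreover have "k = e" if "embeds_at u (take (j+r) w) k" for k
    proof -
      have "k + ?n \<le> j + r" "embeds_at u w k" using that by (simp_all add: emb_take)
      moreover have "e \<le> k" by (rule emin[OF calculation(2)])
      ultimately show ?thesis using r(2) by simp
    qed
    ultimately show ?thesis
    proof (intro SsetI)
      assume h: "embeds_at u (take (j+r) w) e" and h2: "\<And>k. embeds_at u (take (j+r) w) k \<Longrightarrow> k = e"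
      show "embeds_at u (take (j+r) w) (length (take (j+r) w) - ?n)" using h lt by simp
      show "?n \<le> length (take (j+r) w)" using lt by simp
      fix k assume "embeds_at u (take (j+r) w) k"
      from h2[OF this] show "k = length (take (j+r) w) - ?n" using lt by simp
    qed
  qed
  moreover have "domw (drop r u) (drop (j+r) w)"
    unfolding domw_def
  proof
    show "length (drop (j + r) w) = length (drop r u)" using len r by simp
    show "\<forall>i<length (drop r u). drop r u ! i \<le> drop (j + r) w ! i"
    proof (intro allI impI)
      fix i assume i: "i < length (drop r u)"
      hence "r + i < ?n" by simp
      hence "u ! (r+i) \<le> drop j w ! (r+i)" using d unfolding domw_def by auto
      moreover have "j + (r + i) = j + r + i" by simp
      ultimately show "drop r u ! i \<le> drop (j + r) w ! i" using i len r by simp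
    qed
  qed
  ultimately show ?thesis using r by blast
qed

lemma E2:
  assumes len: "length w = j + length u" and s: "sorted u" and r: "r \<in> {1..length u}"
    and S: "take (j+r) w \<in> Sset u" and d: "domw (drop r u) (drop (j+r) w)"
  shows "avoid u (take j w) \<and> domw u (drop j w)"
proof
  let ?n = "length u"
  let ?z = "take (j+r) w"
  have lz: "length ?z = j + r" using len r by simp
  have Sz1: "\<And>k. embeds_at u ?z k \<Longrightarrow> k = j + r - ?n" using SsetD3[OF S] lz by simp
  have Sz2: "embeds_at u ?z (j + r - ?n)" using SsetD1[OF S] lz by simp
  have Sz3: "?n \<le> j + r" using SsetD2[OF S] lz by simp
  note Sz = Sz1 Sz2 Sz3
  show "avoid u (take j w)" unfolding avoid_def
  proof (intro allI notI)
    fix k assume "embeds_at u (take j w) k"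
    hence kk: "k + ?n \<le> j" "embeds_at u w k" by (simp_all add: emb_take)
    hence "embeds_at u ?z k" by (simp add: emb_take)
    hence "k = j + r - ?n" using Sz by blast
    thus False using kk(1) r Sz(3) by simp
  qed
  show "domw u (drop j w)" unfolding domw_def
  proof
    show "length (drop j w) = ?n" using len by simp
    show "\<forall>i<?n. u ! i \<le> drop j w ! i"
    proof (intro allI impI)
      fix i assume i: "i < ?n"
      show "u ! i \<le> drop j w ! i"
      proof (cases "r \<le> i")
        case True
        have h: "\<forall>i<length u - r. u ! (r + i) \<le> w ! (j + r + i)" using d len unfolding domw_def by auto
        have "i - r < length u - r" using i True by simp
        with h have "u ! (r + (i - r)) \<le> w ! (j + r + (i - r))" by blast
        moreover have "r + (i - r) = i" "j + r + (i - r) = j + i" using True by auto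
        ultimately show ?thesis using len by simp
      next
        case False
        define q where "q = ?n - r + i"
        have q: "q < ?n" "i \<le> q" "j + r - ?n + q = j + i" using False r i Sz(3) unfolding q_def by auto
        have hz: "\<forall>i<?n. u ! i \<le> ?z ! (j + r - ?n + i)" using Sz(2) unfolding embeds_at_def by (rule conjunct2)
        have "u ! q \<le> ?z ! (j + r - ?n + q)" using hz q(1) by simp
        also have "?z ! (j + r - ?n + q) = w ! (j + i)" using q False by simp
        finally have "u ! q \<le> w ! (j+i)" .
        moreover have "u ! i \<le> u ! q" using s q by (simp add: sorted_iff_nth_mono)
        ultimately show ?thesis using i len by simp
      qed
    qed
  qed
qed

lemma E3:
  assumes "r < r'" "take (j+r) w \<in> Sset u" "take (j+r') w \<in> Sset u" "j + r' \<le> length w"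
  shows False
proof -
  let ?n = "length u"
  have a: "embeds_at u (take (j+r) w) (j + r - ?n)" "?n \<le> j + r"
    using SsetD1[OF assms(2)] SsetD2[OF assms(2)] assms(1,4) by simp_all
  hence "embeds_at u w (j + r - ?n)" by (simp add: emb_take)
  hence "embeds_at u (take (j+r') w) (j + r - ?n)" using a assms(1) by (simp add: emb_take)
  hence "j + r - ?n = length (take (j+r') w) - ?n" by (rule SsetD3[OF assms(3)])
  hence "j + r - ?n = j + r' - ?n" using assms(4) by simp
  thus False using a assms(1) by simp
qed


definition aa :: "nat \<Rightarrow> nat list \<Rightarrow> (nat \<Rightarrow> real) \<Rightarrow> nat \<Rightarrow> real" where
  "aa m u x k = sum (weight m x) {w\<in>W m k. avoid u w}"
definition ss :: "nat \<Rightarrow> nat list \<Rightarrow> (nat \<Rightarrow> real) \<Rightarrow> nat \<Rightarrow> real" where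
  "ss m u x k = sum (weight m x) {w\<in>W m k. w \<in> Sset u}"
definition DD :: "nat \<Rightarrow> nat list \<Rightarrow> (nat \<Rightarrow> real) \<Rightarrow> nat \<Rightarrow> real" where
  "DD m u x r = sum (weight m x) {v\<in>W m (length u - r). domw (drop r u) v}"

lemma F3: "aa m u x (Suc k) + ss m u x (Suc k) = (\<Sum>i=1..m. x i) * aa m u x k"
proof -
  have h1: "sum (weight m x) {w\<in>W m (k+1). avoid u (take k w) \<and> True} =
        aa m u x k * (\<Sum>i=1..m. x i)"
  proof -
    have s1: "(\<Sum>w\<in>{w\<in>W m 1. True}. weight m x w) = (\<Sum>c\<in>{c\<in>{1..m}. True}. x c)"
      by (rule sum_W1)
    have s2: "{c\<in>{1..m}. True} = {1..m}" by blast
    have s3: "sum (weight m x) {w\<in>W m (k+1). avoid u (take k w) \<and> True} =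
      (\<Sum>w\<in>{w\<in>W m k. avoid u w}. weight m x w) * (\<Sum>w\<in>{w\<in>W m 1. True}. weight m x w)"
      by (rule prodsum)
    show ?thesis unfolding aa_def s3 s1 s2 ..
  qed
  have h2: "{w\<in>W m (k+1). avoid u (take k w) \<and> True} =
      {w\<in>W m (Suc k). avoid u w} \<union> {w\<in>W m (Suc k). w \<in> Sset u}"
  proof (rule set_eqI)
    fix w
    show "w \<in> {w\<in>W m (k+1). avoid u (take k w) \<and> True} \<longleftrightarrow>
      w \<in> {w\<in>W m (Suc k). avoid u w} \<union> {w\<in>W m (Suc k). w \<in> Sset u}"
      using step_char[of w k u] by (auto simp: W_def)
  qed
  have h3: "sum (weight m x) ({w\<in>W m (Suc k). avoid u w} \<union> {w\<in>W m (Suc k). w \<in> Sset u})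
     = aa m u x (Suc k) + ss m u x (Suc k)"
    unfolding aa_def ss_def using finite_W avoid_notS
    by (subst sum.union_disjoint) auto
  show ?thesis using h1 unfolding h2 h3 by (simp add: mult.commute)
qed

lemma F4:
  assumes s: "sorted u"
  shows "aa m u x j * DD m u x 0 = (\<Sum>r\<in>{1..length u}. ss m u x (j+r) * DD m u x r)"
proof -
  let ?n = "length u"
  define R where "R r = {w\<in>W m (j+?n). take (j+r) w \<in> Sset u \<and> domw (drop r u) (drop (j+r) w)}" for r
  have "aa m u x j * DD m u x 0 = sum (weight m x) {w\<in>W m (j+?n). avoid u (take j w) \<and> domw u (drop j w)}"
    unfolding aa_def DD_def by (subst prodsum) simp
  also have "{w\<in>W m (j+?n). avoid u (take j w) \<and> domw u (drop j w)} = (\<Union>r\<in>{1..?n}. R r)"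
  proof
    show "{w\<in>W m (j+?n). avoid u (take j w) \<and> domw u (drop j w)} \<subseteq> (\<Union>r\<in>{1..?n}. R r)"
    proof
      fix w assume "w \<in> {w\<in>W m (j+?n). avoid u (take j w) \<and> domw u (drop j w)}"
      hence w: "w \<in> W m (j+?n)" "avoid u (take j w)" "domw u (drop j w)" by simp_all
      hence "length w = j + ?n" unfolding W_def by simp
      from E1[OF this w(2,3)] obtain r where r: "r \<in> {1..?n}"
        "take (j+r) w \<in> Sset u \<and> domw (drop r u) (drop (j+r) w)" by blast
      have "w \<in> R r" unfolding R_def using w(1) r(2) by simp
      thus "w \<in> (\<Union>r\<in>{1..?n}. R r)" using r(1) by (rule UN_I[rotated])
    qed
    show "(\<Union>r\<in>{1..?n}. R r) \<subseteq> {w\<in>W m (j+?n). avoid u (take j w) \<and> domw u (drop j w)}"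
    proof
      fix w assume "w \<in> (\<Union>r\<in>{1..?n}. R r)"
      then obtain r where r: "r \<in> {1..?n}" "w \<in> R r" by (rule UN_E)
      hence w: "w \<in> W m (j+?n)" "take (j+r) w \<in> Sset u" "domw (drop r u) (drop (j+r) w)"
        unfolding R_def by simp_all
      hence "length w = j + ?n" unfolding W_def by simp
      from E2[OF this s r(1) w(2,3)] show "w \<in> {w\<in>W m (j+?n). avoid u (take j w) \<and> domw u (drop j w)}"
        using w(1) by simp
    qed
  qed
  also have "sum (weight m x) (\<Union>r\<in>{1..?n}. R r) = (\<Sum>r\<in>{1..?n}. sum (weight m x) (R r))"
  proof (rule sum.UNION_disjoint)
    show "\<forall>i\<in>{1..?n}. finite (R i)" unfolding R_def using finite_W by auto
    show "\<forall>i\<in>{1..?n}. \<forall>j\<in>{1..?n}. i \<noteq> j \<longrightarrow> R i \<inter> R j = {}"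
    proof (intro ballI impI)
      fix r r' assume rr: "r \<in> {1..?n}" "r' \<in> {1..?n}" "r \<noteq> r'"
      show "R r \<inter> R r' = {}"
      proof (rule ccontr)
        assume "R r \<inter> R r' \<noteq> {}"
        then obtain w where "w \<in> R r \<inter> R r'" by blast
        hence "w \<in> R r" "w \<in> R r'" by simp_all
        hence w: "length w = j + ?n" "take (j+r) w \<in> Sset u" "take (j+r') w \<in> Sset u"
          unfolding R_def W_def by auto
        show False
        proof (cases "r < r'")
          case True thus False using E3[OF True w(2,3)] w(1) rr by simp
        next
          case False hence "r' < r" using rr by simp
          thus False using E3[OF _ w(3,2)] w(1) rr by simp
        qed
      qed
    qed
  qed simp
  also have "(\<Sum>r\<in>{1..?n}. sum (weight m x) (R r)) = (\<Sum>r\<in>{1..?n}. ss m u x (j+r) * DD m u x r)"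
  proof (rule sum.cong)
    fix r assume r: "r \<in> {1..?n}"
    have "R r = {w\<in>W m ((j+r) + (?n - r)). take (j+r) w \<in> Sset u \<and> domw (drop r u) (drop (j+r) w)}"
      unfolding R_def using r by simp
    thus "sum (weight m x) (R r) = ss m u x (j+r) * DD m u x r"
      unfolding ss_def DD_def using prodsum[where j="j+r" and l="length u - r" and P="\<lambda>w. w \<in> Sset u" and Q="domw (drop r u)" and m=m and x=x] by simp
  qed simp
  finally show ?thesis .
qed


lemma aa0: "u \<noteq> [] \<Longrightarrow> aa m u x 0 = 1"
proof -
  assume "u \<noteq> []"
  hence "avoid u []" unfolding avoid_def embeds_at_def by auto
  hence "{w\<in>W m 0. avoid u w} = {[]}" unfolding W0 by auto
  thus ?thesis unfolding aa_def by (simp add: weight_nil)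
qed

lemma ss_small: "k < length u \<Longrightarrow> ss m u x k = 0"
proof -
  assume "k < length u"
  have "w \<notin> Sset u" if "w \<in> W m k" for w
  proof
    assume "w \<in> Sset u"
    from SsetD2[OF this] that \<open>k < length u\<close> show False unfolding W_def by simp
  qed
  hence e: "{w\<in>W m k. w \<in> Sset u} = {}" by blast
  show ?thesis unfolding ss_def e by simp
qed

lemma aa_nonneg: "\<forall>i\<in>{1..m}. x i \<ge> 0 \<Longrightarrow> aa m u x k \<ge> 0"
  unfolding aa_def by (intro sum_nonneg weight_nonneg)
lemma ss_nonneg: "\<forall>i\<in>{1..m}. x i \<ge> 0 \<Longrightarrow> ss m u x k \<ge> 0"
  unfolding ss_def by (intro sum_nonneg weight_nonneg)
lemma DD_nonneg: "\<forall>i\<in>{1..m}. x i \<ge> 0 \<Longrightarrow> DD m u x k \<ge> 0"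
  unfolding DD_def by (intro sum_nonneg weight_nonneg)

lemma aa_bound:
  assumes "\<forall>i\<in>{1..m}. x i \<ge> 0" "u \<noteq> []"
  shows "aa m u x k \<le> (\<Sum>i=1..m. x i) ^ k"
proof (induction k)
  case 0 thus ?case using aa0[OF assms(2)] by simp
next
  case (Suc k)
  have X: "(\<Sum>i=1..m. x i) \<ge> 0" using assms(1) by (intro sum_nonneg) auto
  have "aa m u x (Suc k) \<le> (\<Sum>i=1..m. x i) * aa m u x k"
    using F3[of m u x k] ss_nonneg[OF assms(1), of u "Suc k"] by linarith
  also have "\<dots> \<le> (\<Sum>i=1..m. x i) * (\<Sum>i=1..m. x i) ^ k"
    using Suc X by (intro mult_left_mono) auto
  finally show ?case by simp
qed

lemma ss_bound:
  assumes "\<forall>i\<in>{1..m}. x i \<ge> 0" "u \<noteq> []"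
  shows "ss m u x k \<le> (\<Sum>i=1..m. x i) ^ k"
proof (cases k)
  case 0 thus ?thesis using ss_small[of k u m x] assms(2) by simp
next
  case (Suc k')
  have X: "(\<Sum>i=1..m. x i) \<ge> 0" using assms(1) by (intro sum_nonneg) auto
  have "ss m u x (Suc k') \<le> (\<Sum>i=1..m. x i) * aa m u x k'"
    using F3[of m u x k'] aa_nonneg[OF assms(1), of u "Suc k'"] by linarith
  also have "\<dots> \<le> (\<Sum>i=1..m. x i) * (\<Sum>i=1..m. x i) ^ k'"
    using aa_bound[OF assms] X by (intro mult_left_mono) auto
  finally show ?thesis using Suc by simp
qed

lemma DD_prod:
  assumes "u \<in> words m" "r \<le> length u"
  shows "DD m u x r = (\<Prod>j\<in>{r..<length u}. \<Sum>l=u!j..m. x l)"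
proof -
  have "set (drop r u) \<subseteq> {1..m}" using assms(1) unfolding words_def mem_Collect_eq
    by (rule order.trans[OF set_drop_subset])
  from sum_dom[OF this, of x]
  have "DD m u x r = (\<Prod>i<length u - r. \<Sum>l=u!(r+i)..m. x l)"
    unfolding DD_def using assms by simp
  also have "\<dots> = (\<Prod>i\<in>{0..<length u - r}. \<Sum>l=u!(i+r)..m. x l)"
    by (simp add: lessThan_atLeast0 add.commute)
  also have "\<dots> = (\<Prod>j\<in>{0+r..<(length u - r)+r}. \<Sum>l=u!j..m. x l)"
    by (rule prod.shift_bounds_nat_ivl[symmetric])
  also have "\<dots> = (\<Prod>j\<in>{r..<length u}. \<Sum>l=u!j..m. x l)" using assms by simp
  finally show ?thesis .
qed


theorem theorem9:
  fixes m :: nat and u :: "nat list" and x :: "nat \<Rightarrow> real"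
  assumes "m \<ge> 1"
    and "u \<noteq> []"
    and "u \<in> words m"
    and "sorted u"
    and "\<forall>i\<in>{1..m}. x i \<ge> 0"
    and "(\<Sum>i=1..m. x i) < 1"
  shows "((\<lambda>w. weight m x w) has_sum
           ((\<Prod>i<length u. \<Sum>j=u!i..m. x j) /
            ((1 + (\<Sum>i\<in>{1..<length u}. \<Prod>j\<in>{i..<length u}. \<Sum>l=u!j..m. x l))
               * (1 - (\<Sum>i=1..m. x i))
             + (\<Prod>i<length u. \<Sum>j=u!i..m. x j))))
         (Sset u \<inter> words m)"
proof -
  let ?n = "length u"
  define X where "X = (\<Sum>i=1..m. x i)"
  define PP where "PP = (\<Prod>i<length u. \<Sum>j=u!i..m. x j)"
  define C where "C = 1 + (\<Sum>i\<in>{1..<length u}. \<Prod>j\<in>{i..<length u}. \<Sum>l=u!j..m. x l)"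
  define a where "a = aa m u x"
  define s where "s = ss m u x"
  define D where "D = DD m u x"
  have n1: "?n \<ge> 1" using assms(2) by (cases u) auto
  have X0: "X \<ge> 0" unfolding X_def using assms(5) by (intro sum_nonneg) auto
  have X1: "X < 1" unfolding X_def using assms(6) .
  have anon: "\<And>k. a k \<ge> 0" unfolding a_def using aa_nonneg[OF assms(5)] .
  have snon: "\<And>k. s k \<ge> 0" unfolding s_def using ss_nonneg[OF assms(5)] .
  have Dnon: "\<And>k. D k \<ge> 0" unfolding D_def using DD_nonneg[OF assms(5)] .
  have geo: "summable (\<lambda>k. X ^ k)" using X0 X1 by (intro summable_geometric) simp
  have suma: "summable a"
    by (rule summable_comparison_test'[OF geo, of 0]) (use anon aa_bound[OF assms(5,2)] in \<open>auto simp: a_def X_def\<close>)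
  have sums: "summable s"
    by (rule summable_comparison_test'[OF geo, of 0]) (use snon ss_bound[OF assms(5,2)] in \<open>auto simp: s_def X_def\<close>)
  define A where "A = suminf a"
  define Sv where "Sv = suminf s"
  have PPD: "PP = D 0" unfolding PP_def D_def using DD_prod[OF assms(3), of 0 x] by (simp add: lessThan_atLeast0)
  have CD: "C = (\<Sum>r\<in>{1..?n}. D r)"
  proof -
    have "(\<Sum>r\<in>{1..?n}. D r) = (\<Sum>r\<in>{1..<?n}. D r) + D ?n"
    proof -
      obtain n' where n': "?n = Suc n'" using n1 by (cases ?n) auto
      show ?thesis unfolding n' using sum.cl_ivl_Suc[of D 1 n'] by (simp add: atLeastLessThanSuc_atLeastAtMost)
    qed
    also have "D ?n = 1" unfolding D_def using DD_prod[OF assms(3), of ?n x] by simp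
    also have "(\<Sum>r\<in>{1..<?n}. D r) = (\<Sum>i\<in>{1..<length u}. \<Prod>j\<in>{i..<length u}. \<Sum>l=u!j..m. x l)"
      unfolding D_def using DD_prod[OF assms(3)] by (intro sum.cong) auto
    finally show ?thesis unfolding C_def by simp
  qed
  have su: "set u \<subseteq> {1..m}" using assms(3) unfolding words_def by simp
  have xl: "x l \<ge> 0" if "j < ?n" "u ! j \<le> l" "l \<le> m" for j l
  proof -
    have "u ! j \<in> set u" using that(1) by simp
    hence "u ! j \<ge> 1" using su by auto
    hence "l \<in> {1..m}" using that by simp
    thus ?thesis using assms(5) by blast
  qed
  have C1: "C \<ge> 1" unfolding C_def
    by (intro add_increasing2 sum_nonneg prod_nonneg) (auto intro: xl)
  have PP0: "PP \<ge> 0" using PPD Dnon by simp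
  have eq1: "A - 1 + Sv = X * A"
  proof -
    have "(\<lambda>k. a (Suc k) + s (Suc k)) = (\<lambda>k. X * a k)"
      unfolding a_def s_def X_def using F3 by auto
    hence "(\<Sum>k. a (Suc k) + s (Suc k)) = X * A" unfolding A_def using suminf_mult[OF suma] by simp
    moreover have "(\<Sum>k. a (Suc k) + s (Suc k)) = (\<Sum>k. a (Suc k)) + (\<Sum>k. s (Suc k))"
      using suma sums by (subst suminf_add) (auto simp: summable_Suc_iff)
    moreover have "(\<Sum>k. a (Suc k)) = A - 1" unfolding A_def
      using suminf_split_head[OF suma] aa0[OF assms(2)] by (simp add: a_def)
    moreover have "(\<Sum>k. s (Suc k)) = Sv" unfolding Sv_def
      using suminf_split_head[OF sums] ss_small[of 0 u m x] n1 assms(2) by (simp add: s_def)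
    ultimately show ?thesis by simp
  qed
  have eq2: "A * PP = Sv * C"
  proof -
    have "A * PP = (\<Sum>j. a j * PP)" unfolding A_def by (rule suminf_mult2[OF suma])
    also have "\<dots> = (\<Sum>j. \<Sum>r\<in>{1..?n}. s (j+r) * D r)"
      unfolding PPD a_def s_def D_def using F4[OF assms(4)] by simp
    also have "\<dots> = (\<Sum>r\<in>{1..?n}. \<Sum>j. s (j+r) * D r)"
    proof (rule suminf_sum)
      fix r show "summable (\<lambda>j. s (j+r) * D r)"
        using sums by (intro summable_mult2) (simp add: summable_iff_shift)
    qed
    also have "\<dots> = (\<Sum>r\<in>{1..?n}. Sv * D r)"
    proof (rule sum.cong)
      fix r assume r: "r \<in> {1..?n}"
      have "Sv = (\<Sum>j. s (j + r)) + (\<Sum>i<r. s i)" unfolding Sv_def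
        by (rule suminf_split_initial_segment[OF sums])
      moreover have "(\<Sum>i<r. s i) = 0" using r ss_small unfolding s_def by (intro sum.neutral) auto
      ultimately have "(\<Sum>j. s (j + r)) = Sv" by simp
      thus "(\<Sum>j. s (j+r) * D r) = Sv * D r"
        using sums by (subst suminf_mult2[symmetric]) (auto simp: summable_iff_shift)
    qed simp
    also have "\<dots> = Sv * C" unfolding CD by (simp add: sum_distrib_left)
    finally show ?thesis .
  qed
  have "C * (1 - X) > 0" using C1 X1 by (intro mult_pos_pos) auto
  hence den: "C * (1 - X) + PP > 0" using PP0 by linarith
  have val: "Sv = PP / (C * (1 - X) + PP)"
  proof -
    have "A * (1 - X) = 1 - Sv" using eq1 by (simp add: algebra_simps)
    have "Sv * C * (1 - X) = (A * PP) * (1 - X)" using eq2 by simp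
    also have "\<dots> = PP * (A * (1 - X))" by (simp only: mult_ac)
    also have "\<dots> = PP * (1 - Sv)" using \<open>A * (1 - X) = 1 - Sv\<close> by simp
    finally have "Sv * C * (1 - X) = PP * (1 - Sv)" .
    hence "Sv * (C * (1 - X) + PP) = PP" by (simp add: algebra_simps)
    thus ?thesis using den by (simp add: field_simps)
  qed
  define B where "B k = {w\<in>W m k. w \<in> Sset u}" for k
  have U: "Sset u \<inter> words m = (\<Union>k. B k)" unfolding B_def W_def words_def by auto
  have disj: "disjoint_family_on B UNIV" unfolding disjoint_family_on_def B_def W_def by auto
  have hB: "((\<lambda>w. weight m x w) has_sum s k) (B k)" for k
    unfolding s_def ss_def B_def using finite_W by (intro has_sum_finite) auto
  have hs: "(s has_sum Sv) UNIV"
    using sums snon unfolding Sv_def by (intro sums_nonneg_imp_has_sum) (auto intro: summable_sums)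
  have wnon: "\<And>w. weight m x w \<ge> 0" using weight_nonneg[OF assms(5)] .
  have summU: "(\<lambda>w. weight m x w) summable_on (\<Union>k\<in>UNIV. B k)"
    using hB hs wnon disj by (intro summable_on_UnionI[where g = s]) (auto intro: has_sum_imp_summable)
  have inj: "inj_on snd (Sigma UNIV B)" using disj unfolding disjoint_family_on_def inj_on_def by auto
  have img: "snd ` Sigma UNIV B = (\<Union>k. B k)"
  proof
    show "snd ` Sigma UNIV B \<subseteq> (\<Union>k. B k)" by auto
    show "(\<Union>k. B k) \<subseteq> snd ` Sigma UNIV B"
    proof
      fix w assume "w \<in> (\<Union>k. B k)"
      then obtain k where k: "w \<in> B k" by (rule UN_E)
      have "w = snd (k, w)" by simp
      moreover have "(k, w) \<in> Sigma UNIV B" using k by simp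
      ultimately show "w \<in> snd ` Sigma UNIV B" by (rule image_eqI)
    qed
  qed
  have s1: "(\<lambda>w. weight m x w) summable_on (snd ` Sigma UNIV B)" unfolding img using summU .
  have "((\<lambda>w. weight m x w) \<circ> snd) summable_on (Sigma UNIV B)"
    using iffD1[OF summable_on_reindex[OF inj] s1] .
  hence "(((\<lambda>w. weight m x w) \<circ> snd) has_sum Sv) (Sigma UNIV B)"
    using hB hs by (intro has_sum_SigmaI[where g = s]) auto
  hence "((\<lambda>w. weight m x w) has_sum Sv) (snd ` Sigma UNIV B)"
    using iffD2[OF has_sum_reindex[OF inj]] by blast
  hence "((\<lambda>w. weight m x w) has_sum Sv) (\<Union>k. B k)" unfolding img .
  thus ?thesis unfolding U using val unfolding PP_def C_def X_def by simp
qed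

end
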